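(* Let $A\in\mathbb{R}^{n\times n}$ be nonsingular with $A^{-1}\geq 0$. Let $A=P_{1}-R_{1}+S_{1}$ be a regular double splitting and $A=P_{2}-R_{2}+S_{2}$ be a weak regular double splitting of $A$. Define $$W_{1}=\begin{pmatrix} P_{1}^{-1}R_{1} & -P_{1}^{-1}S_{1}\\ I & 0\end{pmatrix},\qquad W_{2}=\begin{pmatrix} P_{2}^{-1}R_{2} & -P_{2}^{-1}S_{2}\\ I & 0\end{pmatrix},$$ where $I$ is the $n\times n$ identity matrix. If $P_{1}^{-1}\geq P_{2}^{-1}$ and $R_{1}\geq R_{2}$, then $\rho(W_{1})\leq \rho(W_{2})< 1$.
   Context: For real matrices, $B\geq 0$ means all entries of $B$ are nonnegative, and $B\geq C$ means $B-C\geq 0$. $\rho(\cdot)$ denotes the spectral radius. A double splitting of a square matrix $A$ is a decomposition $A=P-R+S$ with $P$ nonsingular. It is called regular if $P^{-1}\geq 0$, $R\geq 0$ and $-S\geq 0$; it is called weak regular if $P^{-1}\geq 0$, $P^{-1}R\geq 0$ and $-P^{-1}S\geq 0$. *)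

theory Defs
  imports "Jordan_Normal_Form.Spectral_Radius"
begin

definition nonneg_mat :: "real mat \<Rightarrow> bool" where
  "nonneg_mat B \<longleftrightarrow> (\<forall>i < dim_row B. \<forall>j < dim_col B. B $$ (i, j) \<ge> 0)"

definition mat_inv :: "real mat \<Rightarrow> real mat" where
  "mat_inv A = (THE B. inverts_mat A B \<and> inverts_mat B A)"

definition rho :: "real mat \<Rightarrow> real" where
  "rho A = spectral_radius (map_mat complex_of_real A)"

definition double_splitting :: "nat \<Rightarrow> real mat \<Rightarrow> real mat \<Rightarrow> real mat \<Rightarrow> real mat \<Rightarrow> bool" where
  "double_splitting n A P R S \<longleftrightarrow>
     A \<in> carrier_mat n n \<and> P \<in> carrier_mat n n \<and> R \<in> carrier_mat n n \<and> S \<in> carrier_mat n n \<and>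
     invertible_mat P \<and> A = P - R + S"

definition regular_double_splitting :: "nat \<Rightarrow> real mat \<Rightarrow> real mat \<Rightarrow> real mat \<Rightarrow> real mat \<Rightarrow> bool" where
  "regular_double_splitting n A P R S \<longleftrightarrow>
     double_splitting n A P R S \<and> nonneg_mat (mat_inv P) \<and> nonneg_mat R \<and> nonneg_mat (- S)"

definition weak_regular_double_splitting :: "nat \<Rightarrow> real mat \<Rightarrow> real mat \<Rightarrow> real mat \<Rightarrow> real mat \<Rightarrow> bool" where
  "weak_regular_double_splitting n A P R S \<longleftrightarrow>
     double_splitting n A P R S \<and> nonneg_mat (mat_inv P) \<and> nonneg_mat (mat_inv P * R)
     \<and> nonneg_mat (- (mat_inv P * S))"

definition iter_mat :: "nat \<Rightarrow> real mat \<Rightarrow> real mat \<Rightarrow> real mat \<Rightarrow> real mat" where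
  "iter_mat n P R S = four_block_mat (mat_inv P * R) (- (mat_inv P * S)) (1\<^sub>m n) (0\<^sub>m n n)"

end

theory Submission
  imports Defs
begin


lemma mv_sum: "A \<in> carrier_mat nr nc \<Longrightarrow> v \<in> carrier_vec nc \<Longrightarrow> i < nr \<Longrightarrow>
  (A *\<^sub>v v) $ i = (\<Sum>j<nc. A $$ (i,j) * v $ j)"
  by (auto simp: scalar_prod_def lessThan_atLeast0 intro!: sum.cong)

lemma mat_inv_props:
  assumes A: "A \<in> carrier_mat n n" and inv: "invertible_mat A"
  shows "mat_inv A \<in> carrier_mat n n" "A * mat_inv A = 1\<^sub>m n" "mat_inv A * A = 1\<^sub>m n"
proof -
  from inv obtain B where AB: "A * B = 1\<^sub>m n" and BA: "B * A = 1\<^sub>m (dim_row B)"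
    unfolding invertible_mat_def inverts_mat_def using A by auto
  have dB: "dim_col B = n" using AB by (metis index_mult_mat(3) index_one_mat(3))
  have dB2: "dim_row B = n" using BA A by (metis index_mult_mat(3) index_one_mat(3) carrier_matD(2))
  have B: "B \<in> carrier_mat n n" using dB dB2 by auto
  have BA': "B * A = 1\<^sub>m n" using BA dB2 by simp
  have uniq: "C = B" if "inverts_mat A C \<and> inverts_mat C A" for C
  proof -
    from that have AC: "A * C = 1\<^sub>m n" and CA: "C * A = 1\<^sub>m (dim_row C)"
      unfolding inverts_mat_def using A by auto
    have dC: "dim_col C = n" using AC by (metis index_mult_mat(3) index_one_mat(3))
    have dC2: "dim_row C = n" using CA A by (metis index_mult_mat(3) index_one_mat(3) carrier_matD(2))
    have C: "C \<in> carrier_mat n n" using dC dC2 by auto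
    have "C = C * (A * B)" using AB C by simp
    also have "\<dots> = (C * A) * B" using A B C by (simp add: assoc_mult_mat)
    also have "\<dots> = B" using CA dC2 B by simp
    finally show ?thesis .
  qed
  have "inverts_mat A B \<and> inverts_mat B A" unfolding inverts_mat_def using AB BA' A B by auto
  hence "mat_inv A = B" unfolding mat_inv_def using uniq by (rule the_equality)
  thus "mat_inv A \<in> carrier_mat n n" "A * mat_inv A = 1\<^sub>m n" "mat_inv A * A = 1\<^sub>m n"
    using B AB BA' by auto
qed

lemma nonneg_entry: "nonneg_mat B \<Longrightarrow> B \<in> carrier_mat nr nc \<Longrightarrow> i < nr \<Longrightarrow> j < nc \<Longrightarrow> B $$ (i,j) \<ge> 0"
  unfolding nonneg_mat_def by auto

lemma nonneg_mono:
  assumes B: "B \<in> carrier_mat nr nc" and nn: "nonneg_mat B" and u: "u \<in> carrier_vec nc" and v: "v \<in> carrier_vec nc"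
    and le: "\<And>j. j < nc \<Longrightarrow> u $ j \<le> v $ j" and i: "i < nr"
  shows "(B *\<^sub>v u) $ i \<le> (B *\<^sub>v v) $ i"
  unfolding mv_sum[OF B u i] mv_sum[OF B v i]
  by (intro sum_mono mult_left_mono le) (auto intro: nonneg_entry[OF nn B i])

lemma nonneg_vec:
  assumes B: "B \<in> carrier_mat nr nc" and nn: "nonneg_mat B" and v: "v \<in> carrier_vec nc"
    and le: "\<And>j. j < nc \<Longrightarrow> 0 \<le> v $ j" and i: "i < nr"
  shows "0 \<le> (B *\<^sub>v v) $ i"
  unfolding mv_sum[OF B v i]
  by (intro sum_nonneg mult_nonneg_nonneg le) (auto intro: nonneg_entry[OF nn B i])

lemma nonneg_diff:
  assumes B: "B \<in> carrier_mat nr nc" and C: "C \<in> carrier_mat nr nc" and nn: "nonneg_mat (B - C)"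
    and v: "v \<in> carrier_vec nc"
    and le: "\<And>j. j < nc \<Longrightarrow> 0 \<le> v $ j" and i: "i < nr"
  shows "(C *\<^sub>v v) $ i \<le> (B *\<^sub>v v) $ i"
proof -
  have "0 \<le> ((B - C) *\<^sub>v v) $ i"
    by (rule nonneg_vec[OF _ nn v le i]) (use B C in auto)
  also have "((B - C) *\<^sub>v v) $ i = (B *\<^sub>v v) $ i - (C *\<^sub>v v) $ i"
    using B C v i by (simp add: minus_mult_distrib_mat_vec)
  finally show ?thesis by simp
qed

lemma lin3:
  assumes B: "(B::real mat) \<in> carrier_mat nr nc" and u: "u \<in> carrier_vec nc" and v1: "v1 \<in> carrier_vec nc"
    and v2: "v2 \<in> carrier_vec nc" and v3: "v3 \<in> carrier_vec nc"
    and eq: "\<And>j. j < nc \<Longrightarrow> u $ j = a * v1 $ j + b * v2 $ j + c * v3 $ j" and i: "i < nr"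
  shows "(B *\<^sub>v u) $ i = a * (B *\<^sub>v v1) $ i + b * (B *\<^sub>v v2) $ i + c * (B *\<^sub>v v3) $ i"
proof -
  have "(\<Sum>j<nc. B $$ (i,j) * u $ j) = (\<Sum>j<nc. a * (B $$ (i,j) * v1 $ j) + b * (B $$ (i,j) * v2 $ j) + c * (B $$ (i,j) * v3 $ j))"
    by (intro sum.cong) (auto simp: eq algebra_simps)
  thus ?thesis
  unfolding mv_sum[OF B u i] mv_sum[OF B v1 i] mv_sum[OF B v2 i] mv_sum[OF B v3 i]
  by (simp add: sum.distrib sum_distrib_left)
qed

lemma linM:
  assumes B: "(B::real mat) \<in> carrier_mat nr nc" and C: "C \<in> carrier_mat nr nc" and D: "D \<in> carrier_mat nr nc"
    and E: "E \<in> carrier_mat nr nc" and x: "x \<in> carrier_vec nc"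
    and eq: "\<And>i j. i < nr \<Longrightarrow> j < nc \<Longrightarrow> B $$ (i,j) = a * C $$ (i,j) + b * D $$ (i,j) + c * E $$ (i,j)"
    and i: "i < nr"
  shows "(B *\<^sub>v x) $ i = a * (C *\<^sub>v x) $ i + b * (D *\<^sub>v x) $ i + c * (E *\<^sub>v x) $ i"
  unfolding mv_sum[OF B x i] mv_sum[OF C x i] mv_sum[OF D x i] mv_sum[OF E x i]
  by (simp add: eq[OF i] sum_distrib_left sum.distrib algebra_simps)

lemma pos_mult:
  assumes B: "B \<in> carrier_mat n n" and nn: "nonneg_mat B" and C: "C \<in> carrier_mat n n"
    and BC: "B * C = 1\<^sub>m n" and v: "v \<in> carrier_vec n" and pos: "\<And>j. j < n \<Longrightarrow> 0 < v $ j"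
    and i: "i < n"
  shows "0 < (B *\<^sub>v v) $ i"
proof -
  have "\<exists>j<n. B $$ (i,j) \<noteq> 0"
  proof (rule ccontr)
    assume "\<not> ?thesis"
    hence "(B * C) $$ (i,i) = 0" using B C i
      by (simp add: scalar_prod_def)
    thus False using BC i by simp
  qed
  then obtain j where j: "j < n" and nz: "B $$ (i,j) \<noteq> 0" by auto
  have "0 < B $$ (i,j) * v $ j" using nz nonneg_entry[OF nn B i j] pos[OF j] by simp
  also have "\<dots> \<le> (\<Sum>k<n. B $$ (i,k) * v $ k)"
    by (rule member_le_sum[where f = "\<lambda>k. B $$ (i,k) * v $ k"])
       (use j nonneg_entry[OF nn B i] pos in \<open>auto intro!: mult_nonneg_nonneg simp: less_imp_le\<close>)
  finally show ?thesis unfolding mv_sum[OF B v i] .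
qed

lemma nonneg_mult_mat:
  assumes B: "B \<in> carrier_mat nr n" and C: "C \<in> carrier_mat n nc" and nB: "nonneg_mat B" and nC: "nonneg_mat C"
  shows "nonneg_mat (B * C)"
  unfolding nonneg_mat_def
proof (intro allI impI)
  fix i j assume i: "i < dim_row (B * C)" and j: "j < dim_col (B * C)"
  have "row B i \<bullet> col C j = (\<Sum>k<n. B $$ (i,k) * C $$ (k,j))"
    using B C i j by (auto simp: scalar_prod_def lessThan_atLeast0 intro!: sum.cong)
  also have "\<dots> \<ge> 0" using B C i j nonneg_entry[OF nB B] nonneg_entry[OF nC C]
    by (auto intro!: sum_nonneg mult_nonneg_nonneg)
  finally show "0 \<le> (B * C) $$ (i, j)" using i j B C by simp
qed



lemma triangle_vec:
  assumes B: "B \<in> carrier_mat n n" and nn: "nonneg_mat B" and n: "n > 0"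
  shows "\<exists>y \<in> carrier_vec n. (\<forall>i<n. 0 \<le> y $ i) \<and> (\<exists>i<n. 0 < y $ i) \<and>
           (\<forall>i<n. rho B * y $ i \<le> (B *\<^sub>v y) $ i)"
proof -
  let ?C = "map_mat complex_of_real B"
  have C: "?C \<in> carrier_mat n n" using B by auto
  from spectral_radius_mem_max(1)[OF C n] obtain mu where mu: "mu \<in> spectrum ?C"
    and r: "rho B = norm mu" unfolding rho_def by auto
  from mu obtain v where ev: "eigenvector ?C v mu" unfolding spectrum_def eigenvalue_def by auto
  hence v: "v \<in> carrier_vec n" and v0: "v \<noteq> 0\<^sub>v n" and Cv: "?C *\<^sub>v v = mu \<cdot>\<^sub>v v"
    unfolding eigenvector_def using B by auto
  define y where "y = vec n (\<lambda>i. cmod (v $ i))"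
  have y: "y \<in> carrier_vec n" unfolding y_def by auto
  have "\<exists>i<n. v $ i \<noteq> 0"
  proof (rule ccontr)
    assume "\<not> ?thesis"
    hence "v = 0\<^sub>v n" using v by (intro eq_vecI) auto
    with v0 show False by simp
  qed
  then obtain i0 where i0: "i0 < n" "v $ i0 \<noteq> 0" by auto
  show ?thesis
  proof (intro bexI[OF _ y] conjI allI impI exI)
    show "0 \<le> y $ i" if "i < n" for i using that unfolding y_def by auto
    show "i0 < n" "0 < y $ i0" using i0 unfolding y_def by auto
    fix i assume i: "i < n"
    have "mu * v $ i = (?C *\<^sub>v v) $ i" using Cv i v by simp
    also have "\<dots> = (\<Sum>j<n. complex_of_real (B $$ (i,j)) * v $ j)"
      using mv_sum[OF C v i] B i by simp
    finally have eq: "mu * v $ i = (\<Sum>j<n. complex_of_real (B $$ (i,j)) * v $ j)" .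
    have "rho B * y $ i = norm (mu * v $ i)" using i r unfolding y_def by (simp add: norm_mult)
    also have "\<dots> \<le> (\<Sum>j<n. norm (complex_of_real (B $$ (i,j)) * v $ j))"
      unfolding eq by (rule norm_sum)
    also have "\<dots> = (\<Sum>j<n. B $$ (i,j) * y $ j)"
      using nonneg_entry[OF nn B i] unfolding y_def by (intro sum.cong) (auto simp: norm_mult)
    also have "\<dots> = (B *\<^sub>v y) $ i" using mv_sum[OF B y i] by simp
    finally show "rho B * y $ i \<le> (B *\<^sub>v y) $ i" .
  qed
qed

lemma rho_upper:
  assumes B: "B \<in> carrier_mat n n" and nn: "nonneg_mat B" and n: "n > 0"
    and x: "x \<in> carrier_vec n" and xpos: "\<And>i. i < n \<Longrightarrow> 0 < x $ i"
    and le: "\<And>i. i < n \<Longrightarrow> (B *\<^sub>v x) $ i \<le> s * x $ i"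
  shows "rho B \<le> s"
proof -
  from triangle_vec[OF B nn n] obtain y where y: "y \<in> carrier_vec n"
    and y0: "\<And>i. i < n \<Longrightarrow> 0 \<le> y $ i" and ypos: "\<exists>i<n. 0 < y $ i"
    and By: "\<And>i. i < n \<Longrightarrow> rho B * y $ i \<le> (B *\<^sub>v y) $ i" by blast
  define c where "c = Max ((\<lambda>i. y $ i / x $ i) ` {..<n})"
  have fin: "finite ((\<lambda>i. y $ i / x $ i) ` {..<n})" by auto
  have ne: "(\<lambda>i. y $ i / x $ i) ` {..<n} \<noteq> {}" using n by auto
  from Max_in[OF fin ne] obtain i0 where i0: "i0 < n" and c0: "c = y $ i0 / x $ i0"
    unfolding c_def by auto
  have cge: "y $ j / x $ j \<le> c" if "j < n" for j unfolding c_def using that fin by auto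
  have yle: "y $ j \<le> c * x $ j" if "j < n" for j
    using cge[OF that] xpos[OF that] by (simp add: divide_le_eq)
  from ypos obtain j where j: "j < n" "0 < y $ j" by auto
  have cpos: "0 < c" using cge[OF j(1)] j xpos[OF j(1)] by (smt (verit) divide_pos_pos)
  have yi0: "y $ i0 = c * x $ i0" using c0 xpos[OF i0] by simp
  have "rho B * y $ i0 \<le> (B *\<^sub>v y) $ i0" by (rule By[OF i0])
  also have "\<dots> \<le> (B *\<^sub>v (c \<cdot>\<^sub>v x)) $ i0"
    by (rule nonneg_mono[OF B nn y _ _ i0]) (use x yle in auto)
  also have "\<dots> = c * (B *\<^sub>v x) $ i0" using B x i0 by (simp add: mult_mat_vec)
  also have "\<dots> \<le> c * (s * x $ i0)" using le[OF i0] cpos by simp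
  finally have "rho B * (c * x $ i0) \<le> s * (c * x $ i0)" unfolding yi0 by (simp add: ac_simps)
  moreover have "0 < c * x $ i0" using cpos xpos[OF i0] by simp
  ultimately show ?thesis by (rule mult_right_le_imp_le)
qed

lemma smult_mv: "(D::complex mat) \<in> carrier_mat n n \<Longrightarrow> v \<in> carrier_vec n \<Longrightarrow> (a \<cdot>\<^sub>m D) *\<^sub>v v = a \<cdot>\<^sub>v (D *\<^sub>v v)"
  by (intro eq_vecI) (auto simp: mv_sum[of _ n n] sum_distrib_left mult.assoc)

lemma sr_scale:
  assumes D: "(D::complex mat) \<in> carrier_mat n n" and n: "n > 0" and a: "a > 0"
  shows "spectral_radius (complex_of_real a \<cdot>\<^sub>m D) \<le> a * spectral_radius D"
proof -
  let ?E = "complex_of_real a \<cdot>\<^sub>m D"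
  have E: "?E \<in> carrier_mat n n" using D by auto
  from spectral_radius_mem_max(1)[OF E n] obtain mu where mu: "mu \<in> spectrum ?E"
    and r: "spectral_radius ?E = norm mu" by auto
  from mu obtain v where ev: "eigenvector ?E v mu" unfolding spectrum_def eigenvalue_def by auto
  hence v: "v \<in> carrier_vec n" and v0: "v \<noteq> 0\<^sub>v n" and Ev: "?E *\<^sub>v v = mu \<cdot>\<^sub>v v"
    unfolding eigenvector_def using D by auto
  have eqv: "complex_of_real a \<cdot>\<^sub>v (D *\<^sub>v v) = mu \<cdot>\<^sub>v v" using Ev smult_mv[OF D v] by simp
  have "D *\<^sub>v v = (mu / complex_of_real a) \<cdot>\<^sub>v v"
  proof (rule eq_vecI)
    fix i assume "i < dim_vec ((mu / complex_of_real a) \<cdot>\<^sub>v v)"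
    hence i: "i < n" using v by auto
    have "(complex_of_real a \<cdot>\<^sub>v (D *\<^sub>v v)) $ i = (mu \<cdot>\<^sub>v v) $ i" using eqv by simp
    hence "complex_of_real a * (D *\<^sub>v v) $ i = mu * v $ i" using i D v by simp
    thus "(D *\<^sub>v v) $ i = ((mu / complex_of_real a) \<cdot>\<^sub>v v) $ i" using i v a by (simp add: field_simps)
  qed (use D v in auto)
  hence "eigenvector D v (mu / complex_of_real a)" unfolding eigenvector_def using D v v0 by auto
  hence "norm (mu / complex_of_real a) \<in> norm ` spectrum D" unfolding spectrum_def eigenvalue_def by auto
  from spectral_radius_mem_max(2)[OF D n this]
  have "norm mu / a \<le> spectral_radius D" using a by (simp add: norm_divide)
  thus ?thesis using r a by (simp add: divide_le_eq mult.commute)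
qed

lemma rho_nonneg: "B \<in> carrier_mat n n \<Longrightarrow> n > 0 \<Longrightarrow> 0 \<le> rho B"
  unfolding rho_def using spectral_radius_mem_max(1)[of "map_mat complex_of_real B" n] by auto

lemma nonneg_pow: assumes B: "B \<in> carrier_mat n n" and nn: "nonneg_mat B" shows "nonneg_mat (B ^\<^sub>m k)"
proof (induct k)
  case 0 thus ?case using B unfolding nonneg_mat_def by auto
next
  case (Suc k) thus ?case using nonneg_mult_mat[OF pow_carrier_mat[OF B] B _ nn] by simp
qed



lemma rho_lower:
  assumes B: "B \<in> carrier_mat n n" and nn: "nonneg_mat B" and n: "n > 0"
    and z: "z \<in> carrier_vec n" and z0: "\<And>i. i < n \<Longrightarrow> 0 \<le> z $ i" and zpos: "\<exists>i<n. 0 < z $ i"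
    and t: "t > 0" and ge: "\<And>i. i < n \<Longrightarrow> t * z $ i \<le> (B *\<^sub>v z) $ i"
  shows "t \<le> rho B"
proof (rule ccontr)
  assume "\<not> t \<le> rho B"
  hence lt: "rho B < t" by simp
  have r0: "0 \<le> rho B" by (rule rho_nonneg[OF B n])
  define s where "s = (rho B + t) / 2"
  have s: "0 < s" "rho B < s" "s < t" using lt r0 unfolding s_def by auto
  define C where "C = (1 / s) \<cdot>\<^sub>m B"
  have C: "C \<in> carrier_mat n n" using B unfolding C_def by auto
  have nnC: "nonneg_mat C" using nn s B unfolding C_def nonneg_mat_def by auto
  have mapC: "map_mat complex_of_real C = complex_of_real (1/s) \<cdot>\<^sub>m map_mat complex_of_real B"
    unfolding C_def using B by (intro eq_matI) auto
  have "spectral_radius (map_mat complex_of_real C) \<le> (1/s) * rho B"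
    unfolding mapC rho_def by (rule sr_scale) (use B n s in auto)
  also have "\<dots> < 1" using s by (simp add: divide_less_eq)
  finally have "spectral_radius (map_mat complex_of_real C) < 1" .
  from spectral_radius_jnf_norm_bound_less_1_upper_triangular[OF _ this] C
  obtain c where c: "\<And>k. norm_bound (map_mat complex_of_real C ^\<^sub>m k) c" by auto
  have cb: "\<bar>(C ^\<^sub>m k) $$ (i,j)\<bar> \<le> c" if "i < n" "j < n" for i j k
  proof -
    have "map_mat complex_of_real C ^\<^sub>m k = map_mat complex_of_real (C ^\<^sub>m k)"
      using of_real_hom.mat_hom_pow[OF C] by metis
    with c[of k] that C show ?thesis unfolding norm_bound_def by auto
  qed
  have Cz: "(t/s) * z $ i \<le> (C *\<^sub>v z) $ i" if "i < n" for i
  proof -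
    have "(C *\<^sub>v z) $ i = (1/s) * (B *\<^sub>v z) $ i" unfolding C_def
      using mv_sum[OF _ z that, of "(1/s) \<cdot>\<^sub>m B"] mv_sum[OF B z that] B that
      by (simp add: sum_distrib_left mult.assoc)
    thus ?thesis using ge[OF that] s by (simp add: divide_le_eq field_simps)
  qed
  have pw: "\<forall>i<n. (t/s)^k * z $ i \<le> (C ^\<^sub>m k *\<^sub>v z) $ i" for k
  proof (induct k)
    case 0 thus ?case using C z by simp
  next
    case (Suc k)
    show ?case
    proof (intro allI impI)
      fix i assume i: "i < n"
      have Ck: "C ^\<^sub>m k \<in> carrier_mat n n" using C by simp
      have "(t/s)^Suc k * z $ i = (t/s) * ((t/s)^k * z $ i)" by simp
      also have "\<dots> \<le> (t/s) * (C ^\<^sub>m k *\<^sub>v z) $ i" using Suc i s by (intro mult_left_mono) auto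
      also have "\<dots> = (C ^\<^sub>m k *\<^sub>v ((t/s) \<cdot>\<^sub>v z)) $ i" using Ck C z i by (simp add: mult_mat_vec)
      also have "\<dots> \<le> (C ^\<^sub>m k *\<^sub>v (C *\<^sub>v z)) $ i"
        by (rule nonneg_mono[OF Ck nonneg_pow[OF C nnC]]) (use z C Cz i in auto)
      also have "\<dots> = (C ^\<^sub>m Suc k *\<^sub>v z) $ i" using assoc_mult_mat_vec[OF Ck C z] by simp
      finally show "(t/s)^Suc k * z $ i \<le> (C ^\<^sub>m Suc k *\<^sub>v z) $ i" .
    qed
  qed
  from zpos obtain i0 where i0: "i0 < n" "0 < z $ i0" by auto
  define Z where "Z = (\<Sum>j<n. z $ j)"
  have bnd: "(t/s)^k * z $ i0 \<le> c * Z" for k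
  proof -
    have Ck: "C ^\<^sub>m k \<in> carrier_mat n n" using C by simp
    have "(t/s)^k * z $ i0 \<le> (C ^\<^sub>m k *\<^sub>v z) $ i0" using pw i0 by auto
    also have "\<dots> = (\<Sum>j<n. (C ^\<^sub>m k) $$ (i0,j) * z $ j)" by (rule mv_sum[OF Ck z i0(1)])
    also have "\<dots> \<le> (\<Sum>j<n. c * z $ j)"
    proof (rule sum_mono)
      fix j assume "j \<in> {..<n}"
      hence j: "j < n" by simp
      have "(C ^\<^sub>m k) $$ (i0,j) * z $ j \<le> \<bar>(C ^\<^sub>m k) $$ (i0,j)\<bar> * z $ j"
        using z0[OF j] by (intro mult_right_mono) auto
      also have "\<dots> \<le> c * z $ j" using cb[OF i0(1) j] z0[OF j] by (intro mult_right_mono) auto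
      finally show "(C ^\<^sub>m k) $$ (i0,j) * z $ j \<le> c * z $ j" .
    qed
    also have "\<dots> = c * Z" unfolding Z_def by (simp add: sum_distrib_left)
    finally show ?thesis .
  qed
  have "1 < t/s" using s by simp
  from real_arch_pow[OF this, of "c * Z / z $ i0"] obtain k where "c * Z / z $ i0 < (t/s)^k" by auto
  hence "c * Z < (t/s)^k * z $ i0" using i0 by (simp add: divide_less_eq)
  with bnd[of k] show False by simp
qed



lemma resolvent:
  assumes L: "L \<in> carrier_mat n n" and nn: "nonneg_mat L" and n: "n > 0" and lt: "rho L < tau"
  shows "\<exists>w \<in> carrier_vec n. (\<forall>i<n. 0 < w $ i) \<and> (\<forall>i<n. tau * w $ i - (L *\<^sub>v w) $ i = 1)"
proof -
  have tau: "0 < tau" using rho_nonneg[OF L n] lt by simp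
  define K where "K = tau \<cdot>\<^sub>m 1\<^sub>m n - L"
  have K: "K \<in> carrier_mat n n" unfolding K_def using L by auto
  have Kv: "(K *\<^sub>v v) $ i = tau * v $ i - (L *\<^sub>v v) $ i" if v: "v \<in> carrier_vec n" and i: "i < n" for v i
  proof -
    have "(K *\<^sub>v v) $ i = tau * (1\<^sub>m n *\<^sub>v v) $ i + (-1) * (L *\<^sub>v v) $ i + 0 * (L *\<^sub>v v) $ i"
      by (rule linM[OF K one_carrier_mat L L v _ i]) (use L in \<open>auto simp: K_def\<close>)
    thus ?thesis using v by simp
  qed
  have "det K \<noteq> 0"
  proof
    assume "det K = 0"
    from this[unfolded det_0_iff_vec_prod_zero[OF K]] obtain v where v: "v \<in> carrier_vec n"
      and v0: "v \<noteq> 0\<^sub>v n" and Kv0: "K *\<^sub>v v = 0\<^sub>v n" by auto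
    have Lv: "L *\<^sub>v v = tau \<cdot>\<^sub>v v"
    proof (rule eq_vecI)
      fix i assume "i < dim_vec (tau \<cdot>\<^sub>v v)"
      hence i: "i < n" using v by simp
      have "(K *\<^sub>v v) $ i = 0" using Kv0 i by simp
      thus "(L *\<^sub>v v) $ i = (tau \<cdot>\<^sub>v v) $ i" using Kv[OF v i] i v by simp
    qed (use L v in auto)
    let ?C = "map_mat complex_of_real L" and ?v = "map_vec complex_of_real v"
    have C: "?C \<in> carrier_mat n n" using L by simp
    have "?C *\<^sub>v ?v = map_vec complex_of_real (L *\<^sub>v v)"
      using of_real_hom.mult_mat_vec_hom[OF L v] by metis
    also have "\<dots> = complex_of_real tau \<cdot>\<^sub>v ?v" unfolding Lv by (intro eq_vecI) auto
    finally have Cv: "?C *\<^sub>v ?v = complex_of_real tau \<cdot>\<^sub>v ?v" .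
    have "?v \<noteq> 0\<^sub>v n"
    proof
      assume "?v = 0\<^sub>v n"
      hence "v = 0\<^sub>v n" using v by (intro eq_vecI) (auto dest!: arg_cong[where f = "\<lambda>w. w $ _"])
      with v0 show False by simp
    qed
    hence "eigenvector ?C ?v (complex_of_real tau)" unfolding eigenvector_def using Cv v L by auto
    hence "complex_of_real tau \<in> spectrum ?C" unfolding spectrum_def eigenvalue_def by auto
    hence "norm (complex_of_real tau) \<in> norm ` spectrum ?C" by (rule imageI)
    from spectral_radius_mem_max(2)[OF C n this] have "tau \<le> rho L" unfolding rho_def using tau by simp
    with lt show False by simp
  qed
  from det_non_zero_imp_unit[OF K this, of undefined] obtain K' where K': "K' \<in> carrier_mat n n"
    and KK': "K * K' = 1\<^sub>m n" unfolding Units_def ring_mat_def by auto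
  define ones where "ones = vec n (\<lambda>_. 1::real)"
  define w where "w = K' *\<^sub>v ones"
  have ones: "ones \<in> carrier_vec n" unfolding ones_def by simp
  have w: "w \<in> carrier_vec n" unfolding w_def using K' ones by simp
  have "K *\<^sub>v w = ones" unfolding w_def using assoc_mult_mat_vec[OF K K' ones] KK' ones by simp
  hence eqw: "tau * w $ i - (L *\<^sub>v w) $ i = 1" if i: "i < n" for i
    using Kv[OF w i] i unfolding ones_def by (metis index_vec)
  define u where "u = vec n (\<lambda>i. max (- (w $ i)) 0)"
  define wm where "wm = vec n (\<lambda>i. - (w $ i))"
  have u: "u \<in> carrier_vec n" unfolding u_def by simp
  have wm: "wm \<in> carrier_vec n" unfolding wm_def by simp
  have u0: "0 \<le> u $ i" if "i < n" for i using that unfolding u_def by simp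
  have Lu: "tau * u $ i \<le> (L *\<^sub>v u) $ i" if i: "i < n" for i
  proof (cases "0 \<le> w $ i")
    case True
    hence "u $ i = 0" using i unfolding u_def by simp
    thus ?thesis using nonneg_vec[OF L nn u u0 i] by simp
  next
    case False
    hence ui: "u $ i = - w $ i" using i unfolding u_def by simp
    have "(L *\<^sub>v wm) $ i = (-1) * (L *\<^sub>v w) $ i + 0 * (L *\<^sub>v w) $ i + 0 * (L *\<^sub>v w) $ i"
      by (rule lin3[OF L wm w w w _ i]) (simp add: wm_def)
    moreover have "(L *\<^sub>v wm) $ i \<le> (L *\<^sub>v u) $ i"
      by (rule nonneg_mono[OF L nn wm u _ i]) (simp add: wm_def u_def)
    ultimately show ?thesis using eqw[OF i] ui by simp
  qed
  have "\<forall>i<n. u $ i \<le> 0"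
  proof (rule ccontr)
    assume "\<not> ?thesis"
    hence "\<exists>i<n. 0 < u $ i" by force
    from rho_lower[OF L nn n u u0 this tau Lu] lt show False by simp
  qed
  hence w0: "0 \<le> w $ i" if "i < n" for i using that unfolding u_def by (metis index_vec max.cobounded1 neg_le_0_iff_le order_trans)
  have wpos: "0 < w $ i" if i: "i < n" for i
  proof -
    have "0 \<le> (L *\<^sub>v w) $ i" by (rule nonneg_vec[OF L nn w w0 i])
    hence "0 < tau * w $ i" using eqw[OF i] by simp
    thus ?thesis using tau by (simp add: zero_less_mult_iff)
  qed
  show ?thesis using w wpos eqw by blast
qed



lemma W_nonneg:
  assumes M: "M \<in> carrier_mat n n" and N: "N \<in> carrier_mat n n" and nM: "nonneg_mat M" and nN: "nonneg_mat N"
  shows "nonneg_mat (four_block_mat M N (1\<^sub>m n) (0\<^sub>m n n))"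
  unfolding nonneg_mat_def using M N nonneg_entry[OF nM M] nonneg_entry[OF nN N] by auto

lemma W_mult:
  assumes M: "M \<in> carrier_mat n n" and N: "N \<in> carrier_mat n n" and x: "(x::real vec) \<in> carrier_vec n"
  shows "i < n \<Longrightarrow> (four_block_mat M N (1\<^sub>m n) (0\<^sub>m n n) *\<^sub>v (x @\<^sub>v (c \<cdot>\<^sub>v x))) $ i = (M *\<^sub>v x) $ i + c * (N *\<^sub>v x) $ i"
    "n \<le> i \<Longrightarrow> i < n + n \<Longrightarrow> (four_block_mat M N (1\<^sub>m n) (0\<^sub>m n n) *\<^sub>v (x @\<^sub>v (c \<cdot>\<^sub>v x))) $ i = x $ (i - n)"
proof -
  have cx: "c \<cdot>\<^sub>v x \<in> carrier_vec n" using x by simp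
  note eq = four_block_mat_mult_vec[OF M N one_carrier_mat zero_carrier_mat x cx]
  show "i < n \<Longrightarrow> (four_block_mat M N (1\<^sub>m n) (0\<^sub>m n n) *\<^sub>v (x @\<^sub>v (c \<cdot>\<^sub>v x))) $ i = (M *\<^sub>v x) $ i + c * (N *\<^sub>v x) $ i"
    unfolding eq using M N x by (simp add: mult_mat_vec)
  show "n \<le> i \<Longrightarrow> i < n + n \<Longrightarrow> (four_block_mat M N (1\<^sub>m n) (0\<^sub>m n n) *\<^sub>v (x @\<^sub>v (c \<cdot>\<^sub>v x))) $ i = x $ (i - n)"
    unfolding eq using M N x by simp
qed

lemma W_upper:
  assumes M: "M \<in> carrier_mat n n" and N: "N \<in> carrier_mat n n" and nM: "nonneg_mat M" and nN: "nonneg_mat N"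
    and n: "n > 0" and x: "x \<in> carrier_vec n" and xpos: "\<And>i. i < n \<Longrightarrow> 0 < x $ i" and s: "s > 0"
    and le: "\<And>i. i < n \<Longrightarrow> (M *\<^sub>v x) $ i + (N *\<^sub>v x) $ i / s \<le> s * x $ i"
  shows "rho (four_block_mat M N (1\<^sub>m n) (0\<^sub>m n n)) \<le> s"
proof (rule rho_upper[where x = "x @\<^sub>v ((1/s) \<cdot>\<^sub>v x)"])
  show "four_block_mat M N (1\<^sub>m n) (0\<^sub>m n n) \<in> carrier_mat (n+n) (n+n)" using M N by auto
  show "nonneg_mat (four_block_mat M N (1\<^sub>m n) (0\<^sub>m n n))" by (rule W_nonneg[OF M N nM nN])
  show "0 < n + n" using n by simp
  show "x @\<^sub>v (1 / s) \<cdot>\<^sub>v x \<in> carrier_vec (n + n)" using x by auto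
  show "0 < (x @\<^sub>v (1 / s) \<cdot>\<^sub>v x) $ i" if "i < n + n" for i
    using that x xpos s by (cases "i < n") auto
  fix i assume i: "i < n + n"
  show "(four_block_mat M N (1\<^sub>m n) (0\<^sub>m n n) *\<^sub>v (x @\<^sub>v (1 / s) \<cdot>\<^sub>v x)) $ i \<le> s * (x @\<^sub>v (1 / s) \<cdot>\<^sub>v x) $ i"
  proof (cases "i < n")
    case True
    thus ?thesis using W_mult(1)[OF M N x True] le[OF True] x by simp
  next
    case False
    thus ?thesis using W_mult(2)[OF M N x _ i] x i s by simp
  qed
qed

lemma W_lower:
  assumes M: "M \<in> carrier_mat n n" and N: "N \<in> carrier_mat n n" and nM: "nonneg_mat M" and nN: "nonneg_mat N"
    and n: "n > 0" and x: "x \<in> carrier_vec n" and x0: "\<And>i. i < n \<Longrightarrow> 0 \<le> x $ i"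
    and xpos: "\<exists>i<n. 0 < x $ i" and t: "t > 0"
    and ge: "\<And>i. i < n \<Longrightarrow> t * x $ i \<le> (M *\<^sub>v x) $ i + (N *\<^sub>v x) $ i / t"
  shows "t \<le> rho (four_block_mat M N (1\<^sub>m n) (0\<^sub>m n n))"
proof (rule rho_lower[where z = "x @\<^sub>v ((1/t) \<cdot>\<^sub>v x)"])
  show "four_block_mat M N (1\<^sub>m n) (0\<^sub>m n n) \<in> carrier_mat (n+n) (n+n)" using M N by auto
  show "nonneg_mat (four_block_mat M N (1\<^sub>m n) (0\<^sub>m n n))" by (rule W_nonneg[OF M N nM nN])
  show "0 < n + n" using n by simp
  show "x @\<^sub>v (1 / t) \<cdot>\<^sub>v x \<in> carrier_vec (n + n)" using x by auto
  show "0 \<le> (x @\<^sub>v (1 / t) \<cdot>\<^sub>v x) $ i" if "i < n + n" for i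
    using that x x0 t by (cases "i < n") auto
  show "\<exists>i<n + n. 0 < (x @\<^sub>v (1 / t) \<cdot>\<^sub>v x) $ i" proof -
    from xpos obtain i where i: "i < n" "0 < x $ i" by auto
    thus ?thesis using x by (intro exI[of _ i]) auto
  qed
  show "0 < t" by fact
  fix i assume i: "i < n + n"
  show "t * (x @\<^sub>v (1 / t) \<cdot>\<^sub>v x) $ i \<le> (four_block_mat M N (1\<^sub>m n) (0\<^sub>m n n) *\<^sub>v (x @\<^sub>v (1 / t) \<cdot>\<^sub>v x)) $ i"
  proof (cases "i < n")
    case True
    thus ?thesis using W_mult(1)[OF M N x True] ge[OF True] x by simp
  next
    case False
    thus ?thesis using W_mult(2)[OF M N x _ i] x i t by simp
  qed
qed



lemma split_facts:
  assumes A: "(A::real mat) \<in> carrier_mat n n" and P: "P \<in> carrier_mat n n" and R: "R \<in> carrier_mat n n"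
    and S: "S \<in> carrier_mat n n" and AP: "A = P - R + S" and Q: "Q \<in> carrier_mat n n"
    and PiP: "Q * P = 1\<^sub>m n" and x: "x \<in> carrier_vec n" and i: "i < n"
  shows "((Q * R) *\<^sub>v x) $ i = (Q *\<^sub>v (R *\<^sub>v x)) $ i"
    "((- (Q * S)) *\<^sub>v x) $ i = - (Q *\<^sub>v (S *\<^sub>v x)) $ i"
    "x $ i = (Q *\<^sub>v (A *\<^sub>v x)) $ i + (Q *\<^sub>v (R *\<^sub>v x)) $ i - (Q *\<^sub>v (S *\<^sub>v x)) $ i"
proof -
  show "((Q * R) *\<^sub>v x) $ i = (Q *\<^sub>v (R *\<^sub>v x)) $ i" using Q R x by simp
  have e1: "(- (Q * S)) *\<^sub>v x = - ((Q * S) *\<^sub>v x)" by (rule uminus_mult_mat_vec) (use S x in auto)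
  have e2: "(Q * S) *\<^sub>v x = Q *\<^sub>v (S *\<^sub>v x)" by (rule assoc_mult_mat_vec[OF Q S x])
  show "((- (Q * S)) *\<^sub>v x) $ i = - (Q *\<^sub>v (S *\<^sub>v x)) $ i" unfolding e1 e2 using Q S x i by simp
  have Px: "(P *\<^sub>v x) $ j = 1 * (A *\<^sub>v x) $ j + 1 * (R *\<^sub>v x) $ j + (-1) * (S *\<^sub>v x) $ j" if j: "j < n" for j
    by (rule linM[OF P A R S x _ j]) (use A P R S AP in auto)
  have "x = Q *\<^sub>v (P *\<^sub>v x)" using assoc_mult_mat_vec[OF Q P x] PiP x by simp
  hence "x $ i = (Q *\<^sub>v (P *\<^sub>v x)) $ i" by simp
  also have "\<dots> = 1 * (Q *\<^sub>v (A *\<^sub>v x)) $ i + 1 * (Q *\<^sub>v (R *\<^sub>v x)) $ i + (-1) * (Q *\<^sub>v (S *\<^sub>v x)) $ i"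
    by (rule lin3[OF Q _ _ _ _ Px i]) (use A P R S x in auto)
  finally show "x $ i = (Q *\<^sub>v (A *\<^sub>v x)) $ i + (Q *\<^sub>v (R *\<^sub>v x)) $ i - (Q *\<^sub>v (S *\<^sub>v x)) $ i" by simp
qed

lemma weak_lt1:
  assumes n: "n > 0" and A: "A \<in> carrier_mat n n" and P: "P \<in> carrier_mat n n" and R: "R \<in> carrier_mat n n"
    and S: "S \<in> carrier_mat n n" and AP: "A = P - R + S"
    and Pi: "mat_inv P \<in> carrier_mat n n" and PiP: "mat_inv P * P = 1\<^sub>m n"
    and Ai: "Ai \<in> carrier_mat n n" and AAi: "A * Ai = 1\<^sub>m n" and AiA: "Ai * A = 1\<^sub>m n"
    and nAi: "nonneg_mat Ai" and nPi: "nonneg_mat (mat_inv P)"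
    and nM: "nonneg_mat (mat_inv P * R)" and nN: "nonneg_mat (- (mat_inv P * S))"
  shows "rho (iter_mat n P R S) < 1"
proof -
  let ?Pi = "mat_inv P"
  let ?M = "?Pi * R" and ?N = "- (?Pi * S)"
  have M: "?M \<in> carrier_mat n n" and N: "?N \<in> carrier_mat n n" using Pi R S by auto
  define ones where "ones = vec n (\<lambda>_. 1::real)"
  have ones: "ones \<in> carrier_vec n" unfolding ones_def by simp
  define x where "x = Ai *\<^sub>v ones"
  have x: "x \<in> carrier_vec n" unfolding x_def using Ai ones by simp
  have xpos: "0 < x $ i" if "i < n" for i unfolding x_def
    by (rule pos_mult[OF Ai nAi A AiA ones _ that]) (simp add: ones_def)
  have Ax: "A *\<^sub>v x = ones" unfolding x_def using assoc_mult_mat_vec[OF A Ai ones] AAi ones by simp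
  define g where "g = ?Pi *\<^sub>v ones"
  have gpos: "0 < g $ i" if "i < n" for i unfolding g_def
    by (rule pos_mult[OF Pi nPi P PiP ones _ that]) (simp add: ones_def)
  have G: "(?M *\<^sub>v x) $ i + (?N *\<^sub>v x) $ i = x $ i - g $ i" if i: "i < n" for i
    using split_facts[OF A P R S AP Pi PiP x i] unfolding g_def Ax by simp
  define delta where "delta = Min ((\<lambda>i. g $ i / x $ i) ` {..<n})"
  have fin: "finite ((\<lambda>i. g $ i / x $ i) ` {..<n})" by auto
  have ne: "(\<lambda>i. g $ i / x $ i) ` {..<n} \<noteq> {}" using n by auto
  from Min_in[OF fin ne] obtain i0 where i0: "i0 < n" and d0: "delta = g $ i0 / x $ i0"
    unfolding delta_def by auto
  have dpos: "0 < delta" using d0 gpos[OF i0] xpos[OF i0] by simp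
  have dle: "delta * x $ i \<le> g $ i" if "i < n" for i
  proof -
    have "delta \<le> g $ i / x $ i" unfolding delta_def using that fin by auto
    thus ?thesis using xpos[OF that] by (simp add: le_divide_eq)
  qed
  define e where "e = min delta (1/2)"
  define s where "s = sqrt (1 - e)"
  have e: "0 < e" "e \<le> 1/2" "e \<le> delta" unfolding e_def using dpos by auto
  have s: "0 < s" "s < 1" "s * s = 1 - e" unfolding s_def using e by auto
  have "rho (iter_mat n P R S) \<le> s"
    unfolding iter_mat_def
  proof (rule W_upper[OF M N nM nN n x xpos s(1)])
    fix i assume i: "i < n"
    let ?m = "(?M *\<^sub>v x) $ i"
    have m0: "0 \<le> ?m" by (rule nonneg_vec[OF M nM x _ i]) (use xpos in \<open>auto intro: less_imp_le\<close>)
    have Nx: "(?N *\<^sub>v x) $ i = x $ i - g $ i - ?m" using G[OF i] by simp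
    have ex: "e * x $ i \<le> g $ i" using dle[OF i] e(3) xpos[OF i] by (smt (verit) mult_right_mono)
    have "s * ?m + (x $ i - g $ i - ?m) \<le> s * (s * x $ i)"
    proof -
      have "(s - 1) * ?m \<le> 0" using s m0 by (simp add: mult_nonpos_nonneg)
      moreover have "s * (s * x $ i) = x $ i - e * x $ i"
      proof -
        have "s * (s * x $ i) = (s * s) * x $ i" by simp
        also have "\<dots> = (1 - e) * x $ i" using s(3) by simp
        finally show ?thesis by (simp add: algebra_simps)
      qed
      ultimately show ?thesis using ex by (simp add: algebra_simps)
    qed
    hence "(s * ?m + (x $ i - g $ i - ?m)) / s \<le> (s * (s * x $ i)) / s" using s(1) by (intro divide_right_mono) auto
    moreover have "?m + (x $ i - g $ i - ?m) / s = (s * ?m + (x $ i - g $ i - ?m)) / s" using s(1) by (simp add: field_simps)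
    moreover have "(s * (s * x $ i)) / s = s * x $ i" using s(1) by simp
    ultimately have "?m + (x $ i - g $ i - ?m) / s \<le> s * x $ i" by simp
    thus "(?M *\<^sub>v x) $ i + (?N *\<^sub>v x) $ i / s \<le> s * x $ i" unfolding Nx .
  qed
  thus ?thesis using s by simp
qed



theorem corollary3p4:
  fixes n :: nat and A P1 R1 S1 P2 R2 S2 :: "real mat"
  assumes "n > 0"
    and "A \<in> carrier_mat n n" and "invertible_mat A" and "nonneg_mat (mat_inv A)"
    and "regular_double_splitting n A P1 R1 S1"
    and "weak_regular_double_splitting n A P2 R2 S2"
    and "nonneg_mat (mat_inv P1 - mat_inv P2)"
    and "nonneg_mat (R1 - R2)"
  shows "rho (iter_mat n P1 R1 S1) \<le> rho (iter_mat n P2 R2 S2) \<and> rho (iter_mat n P2 R2 S2) < 1"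
proof -
  note n = assms(1) and A = assms(2)
  from assms(5) have P1: "P1 \<in> carrier_mat n n" and R1: "R1 \<in> carrier_mat n n" and S1: "S1 \<in> carrier_mat n n"
    and iP1: "invertible_mat P1" and AP1: "A = P1 - R1 + S1" and nP1i: "nonneg_mat (mat_inv P1)"
    and nR1: "nonneg_mat R1" and nS1: "nonneg_mat (- S1)"
    unfolding regular_double_splitting_def double_splitting_def by auto
  from assms(6) have P2: "P2 \<in> carrier_mat n n" and R2: "R2 \<in> carrier_mat n n" and S2: "S2 \<in> carrier_mat n n"
    and iP2: "invertible_mat P2" and AP2: "A = P2 - R2 + S2" and nP2i: "nonneg_mat (mat_inv P2)"
    and nM2: "nonneg_mat (mat_inv P2 * R2)" and nN2: "nonneg_mat (- (mat_inv P2 * S2))"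
    unfolding weak_regular_double_splitting_def double_splitting_def by auto
  note Aip = mat_inv_props[OF A assms(3)]
  note P1ip = mat_inv_props[OF P1 iP1]
  note P2ip = mat_inv_props[OF P2 iP2]
  define Ai where "Ai = mat_inv A"
  define Q1 where "Q1 = mat_inv P1"
  define Q2 where "Q2 = mat_inv P2"
  have Ai: "Ai \<in> carrier_mat n n" and AAi: "A * Ai = 1\<^sub>m n" and AiA: "Ai * A = 1\<^sub>m n"
    using Aip unfolding Ai_def by auto
  have Q1: "Q1 \<in> carrier_mat n n" and Q1P1: "Q1 * P1 = 1\<^sub>m n" using P1ip unfolding Q1_def by auto
  have Q2: "Q2 \<in> carrier_mat n n" and Q2P2: "Q2 * P2 = 1\<^sub>m n" using P2ip unfolding Q2_def by auto
  have nAi: "nonneg_mat Ai" using assms(4) unfolding Ai_def .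
  have nQ1: "nonneg_mat Q1" using nP1i unfolding Q1_def .
  have nQ2: "nonneg_mat Q2" using nP2i unfolding Q2_def .
  have nQ12: "nonneg_mat (Q1 - Q2)" using assms(7) unfolding Q1_def Q2_def .
  have nM1: "nonneg_mat (Q1 * R1)" by (rule nonneg_mult_mat[OF Q1 R1 nQ1 nR1])
  have "nonneg_mat (Q1 * (- S1))" by (rule nonneg_mult_mat[OF Q1 _ nQ1 nS1]) (use S1 in auto)
  moreover have "Q1 * (- S1) = - (Q1 * S1)" by (rule uminus_mult_right_mat) (use Q1 S1 in auto)
  ultimately have nN1: "nonneg_mat (- (Q1 * S1))" by simp
  define M1 where "M1 = Q1 * R1"
  define N1 where "N1 = - (Q1 * S1)"
  define M2 where "M2 = Q2 * R2"
  define N2 where "N2 = - (Q2 * S2)"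
  have M1: "M1 \<in> carrier_mat n n" and N1: "N1 \<in> carrier_mat n n"
    and M2: "M2 \<in> carrier_mat n n" and N2: "N2 \<in> carrier_mat n n"
    unfolding M1_def N1_def M2_def N2_def using Q1 Q2 R1 R2 S1 S2 by auto
  have W1: "iter_mat n P1 R1 S1 = four_block_mat M1 N1 (1\<^sub>m n) (0\<^sub>m n n)"
    unfolding iter_mat_def M1_def N1_def Q1_def ..
  have W2: "iter_mat n P2 R2 S2 = four_block_mat M2 N2 (1\<^sub>m n) (0\<^sub>m n n)"
    unfolding iter_mat_def M2_def N2_def Q2_def ..
  have lt2: "rho (iter_mat n P2 R2 S2) < 1"
    by (rule weak_lt1[OF n A P2 R2 S2 AP2 P2ip(1) P2ip(3) Ai AAi AiA nAi nP2i nM2 nN2])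
  have lt1: "rho (iter_mat n P1 R1 S1) < 1"
    by (rule weak_lt1[OF n A P1 R1 S1 AP1 P1ip(1) P1ip(3) Ai AAi AiA nAi nP1i])
       (use nM1 nN1 in \<open>simp_all add: Q1_def\<close>)
  define r1 where "r1 = rho (iter_mat n P1 R1 S1)"
  define r2 where "r2 = rho (iter_mat n P2 R2 S2)"
  have r2pos: "0 \<le> r2" unfolding r2_def by (rule rho_nonneg[of _ "n+n"]) (use M2 N2 W2 n in auto)
  have E1: "t*t * x $ i - t * (M1 *\<^sub>v x) $ i - (N1 *\<^sub>v x) $ i
      = t*t * (Q1 *\<^sub>v (A *\<^sub>v x)) $ i + (t*t - t) * (Q1 *\<^sub>v (R1 *\<^sub>v x)) $ i + (1 - t*t) * (Q1 *\<^sub>v (S1 *\<^sub>v x)) $ i"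
    if x: "x \<in> carrier_vec n" and i: "i < n" for x i t
  proof -
    note sf = split_facts[OF A P1 R1 S1 AP1 Q1 Q1P1 x i]
    show ?thesis unfolding M1_def N1_def sf(1) sf(2) sf(3) by (simp add: algebra_simps)
  qed
  have G1: "(M1 *\<^sub>v x) $ i + (N1 *\<^sub>v x) $ i = x $ i - (Q1 *\<^sub>v (A *\<^sub>v x)) $ i"
    if x: "x \<in> carrier_vec n" and i: "i < n" for x i
    using split_facts[OF A P1 R1 S1 AP1 Q1 Q1P1 x i] unfolding M1_def N1_def by (simp add: algebra_simps)
  have G2: "(M2 *\<^sub>v x) $ i + (N2 *\<^sub>v x) $ i = x $ i - (Q2 *\<^sub>v (A *\<^sub>v x)) $ i"
    if x: "x \<in> carrier_vec n" and i: "i < n" for x i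
    using split_facts[OF A P2 R2 S2 AP2 Q2 Q2P2 x i] unfolding M2_def N2_def by (simp add: algebra_simps)
  have "r1 \<le> r2"
  proof (rule ccontr)
    assume "\<not> r1 \<le> r2"
    hence r21: "r2 < r1" by simp
    define t where "t = (r1 + r2) / 2"
    have t: "0 < t" "t < 1" "r2 < t" "t < r1" using r21 r2pos lt1 unfolding t_def r1_def by auto
    define H where "H = (t * (1 - t)) \<cdot>\<^sub>m R1 + (1 - t*t) \<cdot>\<^sub>m (- S1)"
    define L where "L = H * Ai"
    have H: "H \<in> carrier_mat n n" unfolding H_def using R1 S1 by auto
    have L: "L \<in> carrier_mat n n" unfolding L_def using H Ai by auto
    have nH: "nonneg_mat H" unfolding H_def nonneg_mat_def
    proof (intro allI impI)
      fix i j assume "i < dim_row ((t * (1 - t)) \<cdot>\<^sub>m R1 + (1 - t*t) \<cdot>\<^sub>m (- S1))"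
        "j < dim_col ((t * (1 - t)) \<cdot>\<^sub>m R1 + (1 - t*t) \<cdot>\<^sub>m (- S1))"
      hence i: "i < n" and j: "j < n" using S1 by auto
      have a: "0 \<le> R1 $$ (i,j)" by (rule nonneg_entry[OF nR1 R1 i j])
      have b: "0 \<le> (- S1) $$ (i,j)" by (rule nonneg_entry[OF nS1 _ i j]) (use S1 in auto)
      have c1: "0 \<le> t * (1 - t)" and c2: "0 \<le> 1 - t*t" using t by (auto simp: mult_le_one)
      show "0 \<le> ((t * (1 - t)) \<cdot>\<^sub>m R1 + (1 - t*t) \<cdot>\<^sub>m (- S1)) $$ (i, j)"
      proof -
        have "0 \<le> t * (1 - t) * R1 $$ (i,j)" using a c1 by simp
        moreover have "0 \<le> (1 - t*t) * (- S1) $$ (i,j)" using b c2 by simp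
        ultimately show ?thesis using i j R1 S1 by simp
      qed
    qed
    have nL: "nonneg_mat L" unfolding L_def by (rule nonneg_mult_mat[OF H Ai nH nAi])
    have Hx: "(H *\<^sub>v x) $ j = t * (1 - t) * (R1 *\<^sub>v x) $ j - (1 - t*t) * (S1 *\<^sub>v x) $ j"
      if x: "x \<in> carrier_vec n" and j: "j < n" for x j
    proof -
      have "(H *\<^sub>v x) $ j = (t * (1 - t)) * (R1 *\<^sub>v x) $ j + (- (1 - t*t)) * (S1 *\<^sub>v x) $ j + 0 * (S1 *\<^sub>v x) $ j"
        by (rule linM[OF H R1 S1 S1 x _ j]) (use R1 S1 in \<open>auto simp: H_def algebra_simps\<close>)
      thus ?thesis by (simp add: algebra_simps)
    qed
    have Lw: "(L *\<^sub>v w) $ j = (H *\<^sub>v (Ai *\<^sub>v w)) $ j" if w: "w \<in> carrier_vec n" for w j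
      unfolding L_def using assoc_mult_mat_vec[OF H Ai w] by simp
    have AAiw: "A *\<^sub>v (Ai *\<^sub>v w) = w" if w: "w \<in> carrier_vec n" for w
      using assoc_mult_mat_vec[OF A Ai w] AAi w by simp
    show False
    proof (cases "rho L < t * t")
      case True
      from resolvent[OF L nL n True] obtain w where w: "w \<in> carrier_vec n"
        and wpos: "\<And>i. i < n \<Longrightarrow> 0 < w $ i" and weq: "\<And>i. i < n \<Longrightarrow> t * t * w $ i - (L *\<^sub>v w) $ i = 1"
        by blast
      define x where "x = Ai *\<^sub>v w"
      have x: "x \<in> carrier_vec n" unfolding x_def using Ai w by simp
      have xpos: "0 < x $ i" if "i < n" for i unfolding x_def by (rule pos_mult[OF Ai nAi A AiA w wpos that])
      have Ax: "A *\<^sub>v x = w" unfolding x_def by (rule AAiw[OF w])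
      define ones where "ones = vec n (\<lambda>_. 1::real)"
      have ones: "ones \<in> carrier_vec n" unfolding ones_def by simp
      have "r1 \<le> t" unfolding r1_def W1
      proof (rule W_upper[OF M1 N1 _ _ n x xpos t(1)])
        show "nonneg_mat M1" using nM1 unfolding M1_def .
        show "nonneg_mat N1" using nN1 unfolding N1_def .
        fix i assume i: "i < n"
        have onej: "ones $ j = t*t * w $ j + (t*t - t) * (R1 *\<^sub>v x) $ j + (1 - t*t) * (S1 *\<^sub>v x) $ j"
          if j: "j < n" for j
          using weq[OF j] Lw[OF w, of j] Hx[OF x j] j unfolding ones_def x_def[symmetric]
          by (simp add: algebra_simps)
        have "t*t * x $ i - t * (M1 *\<^sub>v x) $ i - (N1 *\<^sub>v x) $ i = (Q1 *\<^sub>v ones) $ i"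
          unfolding E1[OF x i] Ax
          by (rule lin3[OF Q1 ones w _ _ onej i, symmetric]) (use R1 S1 x in auto)
        also have "\<dots> \<ge> 0" by (rule nonneg_vec[OF Q1 nQ1 ones _ i]) (simp add: ones_def)
        finally have "t * (M1 *\<^sub>v x) $ i + (N1 *\<^sub>v x) $ i \<le> t * (t * x $ i)" by simp
        hence "(t * (M1 *\<^sub>v x) $ i + (N1 *\<^sub>v x) $ i) / t \<le> (t * (t * x $ i)) / t"
          using t by (intro divide_right_mono) auto
        thus "(M1 *\<^sub>v x) $ i + (N1 *\<^sub>v x) $ i / t \<le> t * x $ i" using t by (simp add: field_simps)
      qed
      with t show False by simp
    next
      case False
      hence tt: "t * t \<le> rho L" by simp
      from triangle_vec[OF L nL n] obtain w where w: "w \<in> carrier_vec n"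
        and w0: "\<And>i. i < n \<Longrightarrow> 0 \<le> w $ i" and wpos: "\<exists>i<n. 0 < w $ i"
        and Lw': "\<And>i. i < n \<Longrightarrow> rho L * w $ i \<le> (L *\<^sub>v w) $ i" by blast
      define x where "x = Ai *\<^sub>v w"
      have x: "x \<in> carrier_vec n" unfolding x_def using Ai w by simp
      have x0: "0 \<le> x $ i" if "i < n" for i unfolding x_def by (rule nonneg_vec[OF Ai nAi w w0 that])
      have Ax: "A *\<^sub>v x = w" unfolding x_def by (rule AAiw[OF w])
      have xpos: "\<exists>i<n. 0 < x $ i"
      proof (rule ccontr)
        assume "\<not> ?thesis"
        hence "\<forall>i<n. x $ i = 0" using x0 by force
        hence "x = 0\<^sub>v n" using x by (intro eq_vecI) auto
        hence "w = 0\<^sub>v n" using Ax A by auto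
        with wpos show False by auto
      qed
      define u where "u = vec n (\<lambda>j. t*t * w $ j + (t*t - t) * (R1 *\<^sub>v x) $ j + (1 - t*t) * (S1 *\<^sub>v x) $ j)"
      have u: "u \<in> carrier_vec n" unfolding u_def by simp
      have u0: "u $ j \<le> 0" if j: "j < n" for j
      proof -
        have "u $ j = t*t * w $ j - (L *\<^sub>v w) $ j"
          using Lw[OF w, of j] Hx[OF x j] j unfolding u_def x_def[symmetric] by (simp add: algebra_simps)
        also have "\<dots> \<le> 0" using Lw'[OF j] tt w0[OF j] mult_right_mono[OF tt w0[OF j]] by simp
        finally show ?thesis .
      qed
      have "t \<le> r2" unfolding r2_def W2
      proof (rule W_lower[OF M2 N2 _ _ n x x0 xpos t(1)])
        show "nonneg_mat M2" using nM2 unfolding M2_def Q2_def .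
        show "nonneg_mat N2" using nN2 unfolding N2_def Q2_def .
        fix i assume i: "i < n"
        have E1i: "t*t * x $ i - t * (M1 *\<^sub>v x) $ i - (N1 *\<^sub>v x) $ i = (Q1 *\<^sub>v u) $ i"
          unfolding E1[OF x i] Ax
          by (rule lin3[OF Q1 u w _ _ _ i, symmetric]) (use R1 S1 x in \<open>auto simp: u_def\<close>)
        have "(Q1 *\<^sub>v u) $ i \<le> (Q1 *\<^sub>v 0\<^sub>v n) $ i" by (rule nonneg_mono[OF Q1 nQ1 u zero_carrier_vec _ i]) (use u0 in simp)
        also have "\<dots> = 0" using Q1 i by simp
        finally have E1le: "t*t * x $ i - t * (M1 *\<^sub>v x) $ i - (N1 *\<^sub>v x) $ i \<le> 0" unfolding E1i .
        have R1x0: "0 \<le> (R1 *\<^sub>v x) $ j" if "j < n" for j by (rule nonneg_vec[OF R1 nR1 x x0 that])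
        have "(M2 *\<^sub>v x) $ i = (Q2 *\<^sub>v (R2 *\<^sub>v x)) $ i" unfolding M2_def using Q2 R2 x by simp
        also have "\<dots> \<le> (Q2 *\<^sub>v (R1 *\<^sub>v x)) $ i"
          by (rule nonneg_mono[OF Q2 nQ2 _ _ _ i]) (use R1 R2 x nonneg_diff[OF R1 R2 assms(8) x x0] in auto)
        also have "\<dots> \<le> (Q1 *\<^sub>v (R1 *\<^sub>v x)) $ i"
          by (rule nonneg_diff[OF Q1 Q2 nQ12 _ R1x0 i]) (use R1 x in auto)
        also have "\<dots> = (M1 *\<^sub>v x) $ i" unfolding M1_def using Q1 R1 x by simp
        finally have MM: "(M2 *\<^sub>v x) $ i \<le> (M1 *\<^sub>v x) $ i" .
        have QQ: "(Q2 *\<^sub>v w) $ i \<le> (Q1 *\<^sub>v w) $ i" by (rule nonneg_diff[OF Q1 Q2 nQ12 w w0 i])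
        have N1x: "(N1 *\<^sub>v x) $ i = x $ i - (Q1 *\<^sub>v w) $ i - (M1 *\<^sub>v x) $ i" using G1[OF x i] Ax by simp
        have N2x: "(N2 *\<^sub>v x) $ i = x $ i - (Q2 *\<^sub>v w) $ i - (M2 *\<^sub>v x) $ i" using G2[OF x i] Ax by simp
        have "t*t * x $ i - t * (M2 *\<^sub>v x) $ i - (N2 *\<^sub>v x) $ i
            \<le> t*t * x $ i - t * (M1 *\<^sub>v x) $ i - (N1 *\<^sub>v x) $ i"
        proof -
          have "(1 - t) * (M2 *\<^sub>v x) $ i \<le> (1 - t) * (M1 *\<^sub>v x) $ i" using MM t by (intro mult_left_mono) auto
          thus ?thesis unfolding N1x N2x using QQ by (simp add: algebra_simps)
        qed
        with E1le have "t * (t * x $ i) \<le> t * (M2 *\<^sub>v x) $ i + (N2 *\<^sub>v x) $ i" by simp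
        hence "(t * (t * x $ i)) / t \<le> (t * (M2 *\<^sub>v x) $ i + (N2 *\<^sub>v x) $ i) / t"
          using t by (intro divide_right_mono) auto
        thus "t * x $ i \<le> (M2 *\<^sub>v x) $ i + (N2 *\<^sub>v x) $ i / t" using t by (simp add: field_simps)
      qed
      with t show False by simp
    qed
  qed
  thus ?thesis using lt2 unfolding r1_def r2_def by simp
qed

end
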